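(* Let $f\in C^4(\mathbb I)$ on an open interval $\mathbb I$ with $f''>0$ and $f''''>0$ on $\mathbb I$. Let $\rho^{n-1},\rho^n,\phi^n\in\mathcal C$ and let $(\rho^{n+1},\phi^{n+1})\in\mathcal C^2$ solve the scheme, with $\rho^n,\rho^{n+1}$ and $\hat\rho^{n+\frac12}$ taking values in $\mathbb I$. Set $F^k_h:=F_h(\rho^k,\phi^k)$ and $v^{n+\frac12}=\gamma S^{n+\frac12}-\frac\chi2(\phi^{n+1}+\phi^n)+\frac{\chi^2\Delta t}{4\theta}(\rho^{n+1}-\rho^n)$. Then $$F_h^{n+1}-F_h^n\le-\Delta t\Big[\frac{1}{f''(\hat\rho^{n+\frac12})}\nabla_hv^{n+\frac12},\nabla_hv^{n+\frac12}\Big]-\frac{\theta}{\Delta t}\|\phi^{n+1}-\phi^n\|_2^2-\frac{\chi^2\Delta t}{4\theta}\|\rho^{n+1}-\rho^n\|_2^2\le 0 .$$ (This applies in particular to $f(\rho)=\rho(\ln\rho-1)$ and $f(\rho)=\rho(\ln\rho-1)+\kappa\rho^2/2$ on $(0,\infty)$, and to $f(\rho)=\rho\ln\rho+(M-\rho)\ln(1-\rho/M)$ on $(0,M)$.)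
   Context: Grid setting: $\Omega=(a,b)^3$, $N\in\mathbb N$, $h=(b-a)/N$, cell centers $(x_i,y_j,z_k)=(a+(i-\tfrac12)h,a+(j-\tfrac12)h,a+(k-\tfrac12)h)$, $1\le i,j,k\le N$. $\mathcal C$ is the space of cell-centered grid functions $u_{i,j,k}$, extended to ghost points by the discrete homogeneous Neumann condition $u_{0,j,k}=u_{1,j,k}$, $u_{N+1,j,k}=u_{N,j,k}$ (and likewise in $j$ and $k$). Operators: $D_xf_{i+1/2,j,k}=(f_{i+1,j,k}-f_{i,j,k})/h$, $A_xf_{i+1/2,j,k}=(f_{i+1,j,k}+f_{i,j,k})/2$; for face-centered $g$, $d_xg_{i,j,k}=(g_{i+1/2,j,k}-g_{i-1/2,j,k})/h$, $a_xg_{i,j,k}=(g_{i+1/2,j,k}+g_{i-1/2,j,k})/2$; analogously in $y,z$. $\nabla_hf=(D_xf,D_yf,D_zf)$, $\Delta_hf=d_xD_xf+d_yD_yf+d_zD_zf$, and for cell-centered $\mathcal D$, $\nabla_h\cdot(\mathcal D\nabla_hf):=d_x(A_x\mathcal D\,D_xf)+d_y(A_y\mathcal D\,D_yf)+d_z(A_z\mathcal D\,D_zf)$. Inner products: $\langle f,g\rangle=h^3\sum_{i,j,k=1}^Nf_{i,j,k}g_{i,j,k}$, $\|f\|_2^2=\langle f,f\rangle$; for face-centered vector fields $[\vec f,\vec g]=\langle a_x(f^xg^x),1\rangle+\langle a_y(f^yg^y),1\rangle+\langle a_z(f^zg^z),1\rangle$, $\|\nabla_hf\|_2^2=[\nabla_hf,\nabla_hf]$,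 and for cell-centered $\mathcal D$, $[\mathcal D\nabla_hf,\nabla_hg]:=[(A_x\mathcal D\,D_xf,A_y\mathcal D\,D_yf,A_z\mathcal D\,D_zf),\nabla_hg]$. Scheme: parameters $\gamma,\mu,\alpha,\chi,\theta>0$, $\Delta t>0$. With $\hat\rho^{n+\frac12}=\big((\tfrac32\rho^n-\tfrac12\rho^{n-1})^2+\Delta t^8\big)^{1/2}$ pointwise, $(\rho^{n+1},\phi^{n+1})$ satisfies $$\frac{\rho^{n+1}-\rho^n}{\Delta t}=\nabla_h\cdot\Big[\frac{1}{f''(\hat\rho^{n+\frac12})}\nabla_hv^{n+\frac12}\Big],\qquad \theta\frac{\phi^{n+1}-\phi^n}{\Delta t}=\frac\mu2\Delta_h(\phi^{n+1}+\phi^n)-\frac\alpha2(\phi^{n+1}+\phi^n)+\frac\chi2(\rho^{n+1}+\rho^n),$$ with $v^{n+\frac12}$ as in the claim and $S^{n+\frac12}=f'(\rho^{n+1})-\tfrac12f''(\rho^{n+1})(\rho^{n+1}-\rho^n)+\tfrac16f'''(\rho^{n+1})(\rho^{n+1}-\rho^n)^2$ pointwise. Discrete energy: $F_h(\rho,\phi)=\gamma\langle f(\rho),1\rangle-\chi\langle\rho,\phi\rangle+\frac\mu2\|\nabla_h\phi\|_2^2+\frac\alpha2\|\phi\|_2^2$. *)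

theory Defs
  imports "HOL-Analysis.Analysis"
begin

text \<open>Cell-centred grid functions on the N x N x N grid are represented as
  functions on index triples; only the values at indices 1..N are meaningful.
  Face-centred x-values at the face i+1/2 are stored at index i (i = 0..N),
  analogously in y and z.\<close>

type_synonym grid = "nat \<Rightarrow> nat \<Rightarrow> nat \<Rightarrow> real"

text \<open>Ghost-point extension by the discrete homogeneous Neumann condition.\<close>
definition clamp :: "nat \<Rightarrow> nat \<Rightarrow> nat" where
  "clamp N i = (if i = 0 then 1 else if N < i then N else i)"

definition gext :: "nat \<Rightarrow> grid \<Rightarrow> grid" where
  "gext N u = (\<lambda>i j k. u (clamp N i) (clamp N j) (clamp N k))"

definition Dx :: "real \<Rightarrow> nat \<Rightarrow> grid \<Rightarrow> grid" where
  "Dx h N f = (\<lambda>i j k. (gext N f (Suc i) j k - gext N f i j k) / h)"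
definition Dy :: "real \<Rightarrow> nat \<Rightarrow> grid \<Rightarrow> grid" where
  "Dy h N f = (\<lambda>i j k. (gext N f i (Suc j) k - gext N f i j k) / h)"
definition Dz :: "real \<Rightarrow> nat \<Rightarrow> grid \<Rightarrow> grid" where
  "Dz h N f = (\<lambda>i j k. (gext N f i j (Suc k) - gext N f i j k) / h)"

definition Ax :: "nat \<Rightarrow> grid \<Rightarrow> grid" where
  "Ax N f = (\<lambda>i j k. (gext N f (Suc i) j k + gext N f i j k) / 2)"
definition Ay :: "nat \<Rightarrow> grid \<Rightarrow> grid" where
  "Ay N f = (\<lambda>i j k. (gext N f i (Suc j) k + gext N f i j k) / 2)"
definition Az :: "nat \<Rightarrow> grid \<Rightarrow> grid" where
  "Az N f = (\<lambda>i j k. (gext N f i j (Suc k) + gext N f i j k) / 2)"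

text \<open>Face-to-cell operators (evaluated at cells i,j,k >= 1).\<close>
definition dx :: "real \<Rightarrow> grid \<Rightarrow> grid" where
  "dx h g = (\<lambda>i j k. (g i j k - g (i - 1) j k) / h)"
definition dy :: "real \<Rightarrow> grid \<Rightarrow> grid" where
  "dy h g = (\<lambda>i j k. (g i j k - g i (j - 1) k) / h)"
definition dz :: "real \<Rightarrow> grid \<Rightarrow> grid" where
  "dz h g = (\<lambda>i j k. (g i j k - g i j (k - 1)) / h)"

definition ax :: "grid \<Rightarrow> grid" where
  "ax g = (\<lambda>i j k. (g i j k + g (i - 1) j k) / 2)"
definition ay :: "grid \<Rightarrow> grid" where
  "ay g = (\<lambda>i j k. (g i j k + g i (j - 1) k) / 2)"
definition az :: "grid \<Rightarrow> grid" where
  "az g = (\<lambda>i j k. (g i j k + g i j (k - 1)) / 2)"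

definition lap_h :: "real \<Rightarrow> nat \<Rightarrow> grid \<Rightarrow> grid" where
  "lap_h h N f = (\<lambda>i j k. dx h (Dx h N f) i j k + dy h (Dy h N f) i j k + dz h (Dz h N f) i j k)"

definition div_D_grad :: "real \<Rightarrow> nat \<Rightarrow> grid \<Rightarrow> grid \<Rightarrow> grid" where
  "div_D_grad h N D f = (\<lambda>i j k.
      dx h (\<lambda>i j k. Ax N D i j k * Dx h N f i j k) i j k
    + dy h (\<lambda>i j k. Ay N D i j k * Dy h N f i j k) i j k
    + dz h (\<lambda>i j k. Az N D i j k * Dz h N f i j k) i j k)"

definition ip :: "real \<Rightarrow> nat \<Rightarrow> grid \<Rightarrow> grid \<Rightarrow> real" where
  "ip h N f g = h ^ 3 * (\<Sum>i\<in>{1..N}. \<Sum>j\<in>{1..N}. \<Sum>k\<in>{1..N}. f i j k * g i j k)"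

definition norm2sq :: "real \<Rightarrow> nat \<Rightarrow> grid \<Rightarrow> real" where
  "norm2sq h N f = ip h N f f"

definition fip :: "real \<Rightarrow> nat \<Rightarrow> grid \<times> grid \<times> grid \<Rightarrow> grid \<times> grid \<times> grid \<Rightarrow> real" where
  "fip h N F G = (case F of (fx, fy, fz) \<Rightarrow> case G of (gx, gy, gz) \<Rightarrow>
      ip h N (ax (\<lambda>i j k. fx i j k * gx i j k)) (\<lambda>i j k. 1)
    + ip h N (ay (\<lambda>i j k. fy i j k * gy i j k)) (\<lambda>i j k. 1)
    + ip h N (az (\<lambda>i j k. fz i j k * gz i j k)) (\<lambda>i j k. 1))"

definition grad_h :: "real \<Rightarrow> nat \<Rightarrow> grid \<Rightarrow> grid \<times> grid \<times> grid" where
  "grad_h h N f = (Dx h N f, Dy h N f, Dz h N f)"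

definition D_grad_h :: "real \<Rightarrow> nat \<Rightarrow> grid \<Rightarrow> grid \<Rightarrow> grid \<times> grid \<times> grid" where
  "D_grad_h h N D f = ((\<lambda>i j k. Ax N D i j k * Dx h N f i j k),
                       (\<lambda>i j k. Ay N D i j k * Dy h N f i j k),
                       (\<lambda>i j k. Az N D i j k * Dz h N f i j k))"

definition grad_norm2sq :: "real \<Rightarrow> nat \<Rightarrow> grid \<Rightarrow> real" where
  "grad_norm2sq h N f = fip h N (grad_h h N f) (grad_h h N f)"

definition F_h :: "real \<Rightarrow> nat \<Rightarrow> (real \<Rightarrow> real) \<Rightarrow> real \<Rightarrow> real \<Rightarrow> real \<Rightarrow> real
                   \<Rightarrow> grid \<Rightarrow> grid \<Rightarrow> real" where
  "F_h h N f gam chi mu alp rho phi =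
     gam * ip h N (\<lambda>i j k. f (rho i j k)) (\<lambda>i j k. 1) - chi * ip h N rho phi
     + mu / 2 * grad_norm2sq h N phi + alp / 2 * norm2sq h N phi"

definition rho_hat :: "real \<Rightarrow> grid \<Rightarrow> grid \<Rightarrow> grid" where
  "rho_hat dt rhom rho0 = (\<lambda>i j k. sqrt ((3/2 * rho0 i j k - 1/2 * rhom i j k)\<^sup>2 + dt ^ 8))"

definition S_half :: "(real \<Rightarrow> real) \<Rightarrow> (real \<Rightarrow> real) \<Rightarrow> (real \<Rightarrow> real) \<Rightarrow> grid \<Rightarrow> grid \<Rightarrow> grid" where
  "S_half f1 f2 f3 rho0 rho1 = (\<lambda>i j k.
     f1 (rho1 i j k) - 1/2 * f2 (rho1 i j k) * (rho1 i j k - rho0 i j k)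
     + 1/6 * f3 (rho1 i j k) * (rho1 i j k - rho0 i j k)\<^sup>2)"

definition v_half :: "(real \<Rightarrow> real) \<Rightarrow> (real \<Rightarrow> real) \<Rightarrow> (real \<Rightarrow> real) \<Rightarrow> real \<Rightarrow> real \<Rightarrow> real \<Rightarrow> real
                      \<Rightarrow> grid \<Rightarrow> grid \<Rightarrow> grid \<Rightarrow> grid \<Rightarrow> grid" where
  "v_half f1 f2 f3 gam chi th dt rho0 rho1 phi0 phi1 = (\<lambda>i j k.
     gam * S_half f1 f2 f3 rho0 rho1 i j k - chi / 2 * (phi1 i j k + phi0 i j k)
     + chi\<^sup>2 * dt / (4 * th) * (rho1 i j k - rho0 i j k))"

end

theory Submission
  imports Defs
begin

lemma taylor_ineq:
  fixes I :: "real set" and f f1 f2 f3 f4 :: "real \<Rightarrow> real"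
  assumes I_int: "is_interval I"
    and d1: "\<And>x. x \<in> I \<Longrightarrow> (f has_real_derivative f1 x) (at x)"
    and d2: "\<And>x. x \<in> I \<Longrightarrow> (f1 has_real_derivative f2 x) (at x)"
    and d3: "\<And>x. x \<in> I \<Longrightarrow> (f2 has_real_derivative f3 x) (at x)"
    and d4: "\<And>x. x \<in> I \<Longrightarrow> (f3 has_real_derivative f4 x) (at x)"
    and f4_pos: "\<And>x. x \<in> I \<Longrightarrow> f4 x > 0"
    and x: "x \<in> I" and c: "c \<in> I"
  shows "f c - f x \<le> (f1 c - 1/2 * f2 c * (c - x) + 1/6 * f3 c * (c - x)\<^sup>2) * (c - x)"
proof (cases "x = c")
  case True then show ?thesis by simp
next
  case False
  define diff :: "nat \<Rightarrow> real \<Rightarrow> real" where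
    "diff m = (if m = 0 then f else if m = 1 then f1 else if m = 2 then f2 else if m = 3 then f3 else f4)" for m
  have sub: "t \<in> I" if "min x c \<le> t" "t \<le> max x c" for t
  proof -
    have "t \<in> closed_segment x c" using that
      by (auto simp: closed_segment_eq_real_ivl split: if_splits)
    thus ?thesis using I_int x c
      by (meson is_interval_convex convex_contains_segment subsetD)
  qed
  have D: "\<forall>m t. m < 4 \<and> min x c \<le> t \<and> t \<le> max x c \<longrightarrow> DERIV (diff m) t :> diff (Suc m) t"
  proof (intro allI impI)
    fix m :: nat and t assume a: "m < 4 \<and> min x c \<le> t \<and> t \<le> max x c"
    then have tI: "t \<in> I" using sub by auto
    from a have "m = 0 \<or> m = 1 \<or> m = 2 \<or> m = 3" by auto
    then show "DERIV (diff m) t :> diff (Suc m) t"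
      using d1[OF tI] d2[OF tI] d3[OF tI] d4[OF tI] by (auto simp: diff_def)
  qed
  obtain t where t: "(if x < c then x < t \<and> t < c else c < t \<and> t < x)"
    and eq: "f x = (\<Sum>m<4. (diff m c / fact m) * (x - c)^m) + (diff 4 t / fact 4) * (x - c)^4"
    using Taylor[of 4 diff f "min x c" "max x c" c x, OF _ _ D] False by (auto simp: diff_def)
  have "t \<in> I" using t sub by (auto split: if_splits)
  hence pos: "f4 t > 0" using f4_pos by auto
  have eq2: "f x = f c + f1 c * (x - c) + f2 c / 2 * (x-c)^2 + f3 c / 6 * (x - c)^3 + f4 t / 24 * (x - c)^4"
    using eq by (simp add: diff_def lessThan_nat_numeral fact_numeral eval_nat_numeral)
  have "f4 t / 24 * (x - c)^4 \<ge> 0" using pos by simp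
  moreover have "f c - f x = (f1 c - 1/2 * f2 c * (c - x) + 1/6 * f3 c * (c - x)\<^sup>2) * (c - x) - f4 t / 24 * (x - c)^4"
    unfolding eq2 by (simp add: field_simps eval_nat_numeral)
  ultimately show ?thesis by linarith
qed

lemma abel1: "(\<Sum>i\<in>{1..N}. (g i - g (i-1)) * U i) =
   - (\<Sum>i\<in>{1..N}. g i * (U (Suc i) - U i)) + g N * U (Suc N) - g 0 * (U (1::nat) :: real)"
  by (induction N) (auto simp: algebra_simps)

lemma shift1: "(\<Sum>i\<in>{1..(N::nat)}. p (i-1)) = (\<Sum>i\<in>{1..N}. p i) + p 0 - (p N :: real)"
  by (induction N) auto

lemma sbp1:
  fixes g U :: "nat \<Rightarrow> real"
  assumes g0: "g 0 = 0" and gN: "g N = 0"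
  shows "(\<Sum>i\<in>{1..N}. (g i - g (i-1)) / h * U i) =
    - (\<Sum>i\<in>{1..N}. (g i * ((U (Suc i) - U i) / h) + g (i-1) * ((U i - U (i-1)) / h)) / 2)"
proof -
  define p where "p i = g i * ((U (Suc i) - U i) / h)" for i
  have "(\<Sum>i\<in>{1..N}. (g i - g (i-1)) / h * U i) = (\<Sum>i\<in>{1..N}. (g i - g (i-1)) * U i) / h"
    by (simp add: sum_divide_distrib)
  also have "\<dots> = - (\<Sum>i\<in>{1..N}. g i * (U (Suc i) - U i)) / h"
    by (subst abel1) (simp add: g0 gN)
  also have "\<dots> = - (\<Sum>i\<in>{1..N}. p i)"
    by (simp add: p_def sum_divide_distrib)
  finally have L: "(\<Sum>i\<in>{1..N}. (g i - g (i-1)) / h * U i) = - (\<Sum>i\<in>{1..N}. p i)" .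
  have "(\<Sum>i\<in>{1..N}. (g i * ((U (Suc i) - U i) / h) + g (i-1) * ((U i - U (i-1)) / h)) / 2)
      = (\<Sum>i\<in>{1..N}. (p i + p (i-1)) / 2)"
    by (rule sum.cong) (auto simp: p_def)
  also have "\<dots> = ((\<Sum>i\<in>{1..N}. p i) + (\<Sum>i\<in>{1..N}. p (i-1))) / 2"
    by (simp only: sum.distrib flip: sum_divide_distrib)
  also have "\<dots> = (\<Sum>i\<in>{1..N}. p i)"
    by (subst shift1) (simp add: p_def g0 gN)
  finally show ?thesis using L by simp
qed

definition ssum :: "nat \<Rightarrow> grid \<Rightarrow> real" where
  "ssum N F = (\<Sum>i\<in>{1..N}. \<Sum>j\<in>{1..N}. \<Sum>k\<in>{1..N}. F i j k)"

lemma ssum_swap_x: "ssum N F = (\<Sum>j\<in>{1..N}. \<Sum>k\<in>{1..N}. \<Sum>i\<in>{1..N}. F i j k)"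
proof -
  have "ssum N F = (\<Sum>j\<in>{1..N}. \<Sum>i\<in>{1..N}. \<Sum>k\<in>{1..N}. F i j k)"
    unfolding ssum_def by (rule sum.swap)
  also have "\<dots> = (\<Sum>j\<in>{1..N}. \<Sum>k\<in>{1..N}. \<Sum>i\<in>{1..N}. F i j k)"
    by (rule sum.cong[OF refl], rule sum.swap)
  finally show ?thesis .
qed

lemma ssum_swap_y: "ssum N F = (\<Sum>i\<in>{1..N}. \<Sum>k\<in>{1..N}. \<Sum>j\<in>{1..N}. F i j k)"
  unfolding ssum_def
  apply (rule sum.cong, simp)
  apply (subst sum.swap, simp)
  done

lemma clamp_in: "1 \<le> N \<Longrightarrow> clamp N i \<in> {1..N}"
  by (auto simp: clamp_def)

lemma clamp_id: "i \<in> {1..N} \<Longrightarrow> clamp N i = i"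
  by (auto simp: clamp_def)

lemma gext_id: "i \<in> {1..N} \<Longrightarrow> j \<in> {1..N} \<Longrightarrow> k \<in> {1..N} \<Longrightarrow> gext N u i j k = u i j k"
  by (simp add: gext_def clamp_id)

lemma clamp0: "1 \<le> N \<Longrightarrow> clamp N 0 = clamp N 1"
  by (auto simp: clamp_def)
lemma clampN: "1 \<le> N \<Longrightarrow> clamp N (Suc N) = clamp N N"
  by (auto simp: clamp_def)

lemma sbp_x:
  assumes N: "1 \<le> N"
  shows "ssum N (\<lambda>i j k. dx h (\<lambda>i j k. c i j k * Dx h N W i j k) i j k * U i j k)
       = - ssum N (\<lambda>i j k. ax (\<lambda>i j k. c i j k * Dx h N W i j k * Dx h N U i j k) i j k)"
proof -
  have "ssum N (\<lambda>i j k. dx h (\<lambda>i j k. c i j k * Dx h N W i j k) i j k * U i j k)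
     = (\<Sum>j\<in>{1..N}. \<Sum>k\<in>{1..N}. - (\<Sum>i\<in>{1..N}. ax (\<lambda>i j k. c i j k * Dx h N W i j k * Dx h N U i j k) i j k))"
    unfolding ssum_swap_x
  proof (intro sum.cong refl)
    fix j k assume jk: "j \<in> {1..N}" "k \<in> {1..N}"
    define g where "g i = c i j k * Dx h N W i j k" for i
    define V where "V i = gext N U i j k" for i
    have "(\<Sum>i\<in>{1..N}. dx h (\<lambda>i j k. c i j k * Dx h N W i j k) i j k * U i j k)
        = (\<Sum>i\<in>{1..N}. (g i - g (i-1)) / h * V i)"
      by (rule sum.cong) (use jk in \<open>auto simp: dx_def g_def V_def gext_id\<close>)
    also have "\<dots> = - (\<Sum>i\<in>{1..N}. (g i * ((V (Suc i) - V i) / h) + g (i-1) * ((V i - V (i-1)) / h)) / 2)"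
      by (rule sbp1) (auto simp: g_def Dx_def gext_def clamp0[OF N] clampN[OF N])
    also have "\<dots> = - (\<Sum>i\<in>{1..N}. ax (\<lambda>i j k. c i j k * Dx h N W i j k * Dx h N U i j k) i j k)"
      by (intro arg_cong[where f=uminus] sum.cong) (auto simp: ax_def g_def V_def Dx_def)
    finally show "(\<Sum>i\<in>{1..N}. dx h (\<lambda>i j k. c i j k * Dx h N W i j k) i j k * U i j k)
        = - (\<Sum>i\<in>{1..N}. ax (\<lambda>i j k. c i j k * Dx h N W i j k * Dx h N U i j k) i j k)" .
  qed
  also have "\<dots> = - ssum N (\<lambda>i j k. ax (\<lambda>i j k. c i j k * Dx h N W i j k * Dx h N U i j k) i j k)"
    unfolding ssum_swap_x by (simp add: sum_negf)
  finally show ?thesis .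
qed

lemma sbp_y:
  assumes N: "1 \<le> N"
  shows "ssum N (\<lambda>i j k. dy h (\<lambda>i j k. c i j k * Dy h N W i j k) i j k * U i j k)
       = - ssum N (\<lambda>i j k. ay (\<lambda>i j k. c i j k * Dy h N W i j k * Dy h N U i j k) i j k)"
proof -
  have "ssum N (\<lambda>i j k. dy h (\<lambda>i j k. c i j k * Dy h N W i j k) i j k * U i j k)
     = (\<Sum>i\<in>{1..N}. \<Sum>k\<in>{1..N}. - (\<Sum>j\<in>{1..N}. ay (\<lambda>i j k. c i j k * Dy h N W i j k * Dy h N U i j k) i j k))"
    unfolding ssum_swap_y
  proof (intro sum.cong refl)
    fix i k assume jk: "i \<in> {1..N}" "k \<in> {1..N}"
    define g where "g j = c i j k * Dy h N W i j k" for j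
    define V where "V j = gext N U i j k" for j
    have "(\<Sum>j\<in>{1..N}. dy h (\<lambda>i j k. c i j k * Dy h N W i j k) i j k * U i j k)
        = (\<Sum>j\<in>{1..N}. (g j - g (j-1)) / h * V j)"
      by (rule sum.cong) (use jk in \<open>auto simp: dy_def g_def V_def gext_id\<close>)
    also have "\<dots> = - (\<Sum>j\<in>{1..N}. (g j * ((V (Suc j) - V j) / h) + g (j-1) * ((V j - V (j-1)) / h)) / 2)"
      by (rule sbp1) (auto simp: g_def Dy_def gext_def clamp0[OF N] clampN[OF N])
    also have "\<dots> = - (\<Sum>j\<in>{1..N}. ay (\<lambda>i j k. c i j k * Dy h N W i j k * Dy h N U i j k) i j k)"
      by (intro arg_cong[where f=uminus] sum.cong) (auto simp: ay_def g_def V_def Dy_def)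
    finally show "(\<Sum>j\<in>{1..N}. dy h (\<lambda>i j k. c i j k * Dy h N W i j k) i j k * U i j k)
        = - (\<Sum>j\<in>{1..N}. ay (\<lambda>i j k. c i j k * Dy h N W i j k * Dy h N U i j k) i j k)" .
  qed
  also have "\<dots> = - ssum N (\<lambda>i j k. ay (\<lambda>i j k. c i j k * Dy h N W i j k * Dy h N U i j k) i j k)"
    unfolding ssum_swap_y by (simp add: sum_negf)
  finally show ?thesis .
qed

lemma sbp_z:
  assumes N: "1 \<le> N"
  shows "ssum N (\<lambda>i j k. dz h (\<lambda>i j k. c i j k * Dz h N W i j k) i j k * U i j k)
       = - ssum N (\<lambda>i j k. az (\<lambda>i j k. c i j k * Dz h N W i j k * Dz h N U i j k) i j k)"
proof -
  have "ssum N (\<lambda>i j k. dz h (\<lambda>i j k. c i j k * Dz h N W i j k) i j k * U i j k)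
     = (\<Sum>i\<in>{1..N}. \<Sum>j\<in>{1..N}. - (\<Sum>k\<in>{1..N}. az (\<lambda>i j k. c i j k * Dz h N W i j k * Dz h N U i j k) i j k))"
    unfolding ssum_def
  proof (intro sum.cong refl)
    fix i j assume jk: "i \<in> {1..N}" "j \<in> {1..N}"
    define g where "g k = c i j k * Dz h N W i j k" for k
    define V where "V k = gext N U i j k" for k
    have "(\<Sum>k\<in>{1..N}. dz h (\<lambda>i j k. c i j k * Dz h N W i j k) i j k * U i j k)
        = (\<Sum>k\<in>{1..N}. (g k - g (k-1)) / h * V k)"
      by (rule sum.cong) (use jk in \<open>auto simp: dz_def g_def V_def gext_id\<close>)
    also have "\<dots> = - (\<Sum>k\<in>{1..N}. (g k * ((V (Suc k) - V k) / h) + g (k-1) * ((V k - V (k-1)) / h)) / 2)"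
      by (rule sbp1) (auto simp: g_def Dz_def gext_def clamp0[OF N] clampN[OF N])
    also have "\<dots> = - (\<Sum>k\<in>{1..N}. az (\<lambda>i j k. c i j k * Dz h N W i j k * Dz h N U i j k) i j k)"
      by (intro arg_cong[where f=uminus] sum.cong) (auto simp: az_def g_def V_def Dz_def)
    finally show "(\<Sum>k\<in>{1..N}. dz h (\<lambda>i j k. c i j k * Dz h N W i j k) i j k * U i j k)
        = - (\<Sum>k\<in>{1..N}. az (\<lambda>i j k. c i j k * Dz h N W i j k * Dz h N U i j k) i j k)" .
  qed
  also have "\<dots> = - ssum N (\<lambda>i j k. az (\<lambda>i j k. c i j k * Dz h N W i j k * Dz h N U i j k) i j k)"
    unfolding ssum_def by (simp add: sum_negf)
  finally show ?thesis .
qed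

lemma ssum_add: "ssum N (\<lambda>i j k. F i j k + G i j k) = ssum N F + ssum N G"
  by (simp add: ssum_def sum.distrib)
lemma ssum_diff: "ssum N (\<lambda>i j k. F i j k - G i j k) = ssum N F - ssum N G"
  by (simp add: ssum_def sum_subtractf)
lemma ssum_cmult: "ssum N (\<lambda>i j k. a * F i j k) = a * ssum N F"
  by (simp add: ssum_def sum_distrib_left)
lemma ssum_cong: "(\<And>i j k. i \<in> {1..N} \<Longrightarrow> j \<in> {1..N} \<Longrightarrow> k \<in> {1..N} \<Longrightarrow> F i j k = G i j k)
   \<Longrightarrow> ssum N F = ssum N G"
  unfolding ssum_def by (intro sum.cong refl) auto
lemma ssum_nonneg: "(\<And>i j k. i \<in> {1..N} \<Longrightarrow> j \<in> {1..N} \<Longrightarrow> k \<in> {1..N} \<Longrightarrow> 0 \<le> F i j k)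
   \<Longrightarrow> 0 \<le> ssum N F"
  unfolding ssum_def by (intro sum_nonneg) auto
lemma ip_ssum: "ip h N f g = h^3 * ssum N (\<lambda>i j k. f i j k * g i j k)"
  by (simp add: ip_def ssum_def)

lemma sbp3:
  assumes N: "1 \<le> N"
  shows "ip h N (\<lambda>i j k. dx h (\<lambda>i j k. c1 i j k * Dx h N W i j k) i j k
           + dy h (\<lambda>i j k. c2 i j k * Dy h N W i j k) i j k
           + dz h (\<lambda>i j k. c3 i j k * Dz h N W i j k) i j k) U
     = - fip h N ((\<lambda>i j k. c1 i j k * Dx h N W i j k), (\<lambda>i j k. c2 i j k * Dy h N W i j k),
                  (\<lambda>i j k. c3 i j k * Dz h N W i j k)) (grad_h h N U)"
  unfolding ip_ssum fip_def grad_h_def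
  apply (simp only: distrib_right ssum_add mult_1_right split)
  apply (simp only: sbp_x[OF N] sbp_y[OF N] sbp_z[OF N])
  apply (simp add: algebra_simps)
  done

theorem mainTheorem4:
  fixes a b :: real and N :: nat and h :: real
    and I :: "real set"
    and f f1 f2 f3 f4 :: "real \<Rightarrow> real"
    and gam mu alp chi th dt :: real
    and rhom rho0 rho1 phi0 phi1 :: grid
  assumes ab: "a < b" and N: "N \<ge> 1" and h: "h = (b - a) / real N"
    and I_open: "open I" and I_int: "is_interval I" and I_ne: "I \<noteq> {}"
    and d1: "\<And>x. x \<in> I \<Longrightarrow> (f has_real_derivative f1 x) (at x)"
    and d2: "\<And>x. x \<in> I \<Longrightarrow> (f1 has_real_derivative f2 x) (at x)"
    and d3: "\<And>x. x \<in> I \<Longrightarrow> (f2 has_real_derivative f3 x) (at x)"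
    and d4: "\<And>x. x \<in> I \<Longrightarrow> (f3 has_real_derivative f4 x) (at x)"
    and c4: "continuous_on I f4"
    and f2_pos: "\<And>x. x \<in> I \<Longrightarrow> f2 x > 0"
    and f4_pos: "\<And>x. x \<in> I \<Longrightarrow> f4 x > 0"
    and params: "gam > 0" "mu > 0" "alp > 0" "chi > 0" "th > 0" "dt > 0"
    and rho0_I: "\<And>i j k. i \<in> {1..N} \<Longrightarrow> j \<in> {1..N} \<Longrightarrow> k \<in> {1..N} \<Longrightarrow> rho0 i j k \<in> I"
    and rho1_I: "\<And>i j k. i \<in> {1..N} \<Longrightarrow> j \<in> {1..N} \<Longrightarrow> k \<in> {1..N} \<Longrightarrow> rho1 i j k \<in> I"
    and rhohat_I: "\<And>i j k. i \<in> {1..N} \<Longrightarrow> j \<in> {1..N} \<Longrightarrow> k \<in> {1..N} \<Longrightarrow>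
                     rho_hat dt rhom rho0 i j k \<in> I"
    and scheme_rho: "\<And>i j k. i \<in> {1..N} \<Longrightarrow> j \<in> {1..N} \<Longrightarrow> k \<in> {1..N} \<Longrightarrow>
        (rho1 i j k - rho0 i j k) / dt =
        div_D_grad h N (\<lambda>i j k. 1 / f2 (rho_hat dt rhom rho0 i j k))
          (v_half f1 f2 f3 gam chi th dt rho0 rho1 phi0 phi1) i j k"
    and scheme_phi: "\<And>i j k. i \<in> {1..N} \<Longrightarrow> j \<in> {1..N} \<Longrightarrow> k \<in> {1..N} \<Longrightarrow>
        th * (phi1 i j k - phi0 i j k) / dt =
        mu / 2 * lap_h h N (\<lambda>i j k. phi1 i j k + phi0 i j k) i j k
        - alp / 2 * (phi1 i j k + phi0 i j k) + chi / 2 * (rho1 i j k + rho0 i j k)"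
  shows
    "let v = v_half f1 f2 f3 gam chi th dt rho0 rho1 phi0 phi1;
         D = (\<lambda>i j k. 1 / f2 (rho_hat dt rhom rho0 i j k));
         R = - dt * fip h N (D_grad_h h N D v) (grad_h h N v)
             - th / dt * norm2sq h N (\<lambda>i j k. phi1 i j k - phi0 i j k)
             - chi\<^sup>2 * dt / (4 * th) * norm2sq h N (\<lambda>i j k. rho1 i j k - rho0 i j k)
     in F_h h N f gam chi mu alp rho1 phi1 - F_h h N f gam chi mu alp rho0 phi0 \<le> R \<and> R \<le> 0"
proof -
  define v where "v = v_half f1 f2 f3 gam chi th dt rho0 rho1 phi0 phi1"
  define D where "D = (\<lambda>i j k. 1 / f2 (rho_hat dt rhom rho0 i j k))"
  define c where "c = chi\<^sup>2 * dt / (4 * th)"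
  define H where "H = h^3"
  define dr where "dr = (\<lambda>i j k. rho1 i j k - rho0 i j k :: real)"
  define dp where "dp = (\<lambda>i j k. phi1 i j k - phi0 i j k :: real)"
  define sp where "sp = (\<lambda>i j k. phi1 i j k + phi0 i j k :: real)"
  define Gv where "Gv = fip h N (D_grad_h h N D v) (grad_h h N v)"
  have hpos: "h > 0" using ab N h by simp
  have Hpos: "H > 0" using hpos by (simp add: H_def)
  have Dpos: "gext N D i j k > 0" for i j k
  proof -
    have "rho_hat dt rhom rho0 (clamp N i) (clamp N j) (clamp N k) \<in> I"
      using rhohat_I clamp_in[OF N] by blast
    thus ?thesis using f2_pos by (simp add: gext_def D_def)
  qed
  have AxD: "Ax N D i j k \<ge> 0" "Ay N D i j k \<ge> 0" "Az N D i j k \<ge> 0" for i j k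
    using Dpos[of "Suc i" j k] Dpos[of i j k] Dpos[of i "Suc j" k] Dpos[of i j "Suc k"]
    by (auto simp: Ax_def Ay_def Az_def)
  have Gv_nonneg: "Gv \<ge> 0"
    unfolding Gv_def fip_def D_grad_h_def grad_h_def ip_ssum
    using Hpos[unfolded H_def] AxD
    by (auto intro!: add_nonneg_nonneg mult_nonneg_nonneg ssum_nonneg
             simp: ax_def ay_def az_def mult.assoc)
  have A: "ip h N (div_D_grad h N D v) v = - Gv"
    unfolding Gv_def D_grad_h_def div_D_grad_def by (rule sbp3[OF N])
  have C: "ip h N dr v = dt * ip h N (div_D_grad h N D v) v"
  proof -
    have "ip h N dr v = h^3 * ssum N (\<lambda>i j k. dt * (div_D_grad h N D v i j k * v i j k))"
      unfolding ip_ssum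
    proof (intro arg_cong[where f="\<lambda>x. h^3 * x"] ssum_cong)
      fix i j k assume r: "i \<in> {1..N}" "j \<in> {1..N}" "k \<in> {1..N}"
      have "dr i j k / dt = div_D_grad h N D v i j k"
        using scheme_rho[OF r] by (simp add: dr_def D_def v_def)
      hence "dr i j k = dt * div_D_grad h N D v i j k" using params(6) by (simp add: field_simps)
      thus "dr i j k * v i j k = dt * (div_D_grad h N D v i j k * v i j k)" by simp
    qed
    thus ?thesis by (simp add: ip_ssum ssum_cmult)
  qed
  have Dxs: "Dx h N sp = (\<lambda>i j k. Dx h N phi1 i j k + Dx h N phi0 i j k)"
            "Dy h N sp = (\<lambda>i j k. Dy h N phi1 i j k + Dy h N phi0 i j k)"
            "Dz h N sp = (\<lambda>i j k. Dz h N phi1 i j k + Dz h N phi0 i j k)"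
    using hpos by (auto simp: fun_eq_iff sp_def Dx_def Dy_def Dz_def gext_def field_simps)
  have Dxd: "Dx h N dp = (\<lambda>i j k. Dx h N phi1 i j k - Dx h N phi0 i j k)"
            "Dy h N dp = (\<lambda>i j k. Dy h N phi1 i j k - Dy h N phi0 i j k)"
            "Dz h N dp = (\<lambda>i j k. Dz h N phi1 i j k - Dz h N phi0 i j k)"
    using hpos by (auto simp: fun_eq_iff dp_def Dx_def Dy_def Dz_def gext_def field_simps)
  have L1: "ip h N (lap_h h N sp) dp = - fip h N ((\<lambda>i j k. 1 * Dx h N sp i j k), (\<lambda>i j k. 1 * Dy h N sp i j k),
                  (\<lambda>i j k. 1 * Dz h N sp i j k)) (grad_h h N dp)"
    using sbp3[OF N, of h "\<lambda>_ _ _. 1" sp "\<lambda>_ _ _. 1" "\<lambda>_ _ _. 1" dp] by (simp add: lap_h_def)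
  have L2: "fip h N ((\<lambda>i j k. 1 * Dx h N sp i j k), (\<lambda>i j k. 1 * Dy h N sp i j k),
                  (\<lambda>i j k. 1 * Dz h N sp i j k)) (grad_h h N dp)
           = grad_norm2sq h N phi1 - grad_norm2sq h N phi0"
    unfolding grad_norm2sq_def fip_def grad_h_def ip_ssum
    by (simp add: Dxs Dxd ax_def ay_def az_def ssum_def field_simps sum_subtractf sum.distrib
          flip: sum_divide_distrib)
  define S where "S = S_half f1 f2 f3 rho0 rho1"
  define T where "T = (\<lambda>i j k. f (rho1 i j k) - f (rho0 i j k) - S i j k * dr i j k)"
  define L where "L = lap_h h N sp"
  have Tle: "ssum N T \<le> 0"
  proof -
    have "0 \<le> ssum N (\<lambda>i j k. - T i j k)"
    proof (rule ssum_nonneg)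
      fix i j k assume r: "i \<in> {1..N}" "j \<in> {1..N}" "k \<in> {1..N}"
      show "0 \<le> - T i j k"
        using taylor_ineq[OF I_int d1 d2 d3 d4 f4_pos rho0_I[OF r] rho1_I[OF r]]
        by (simp add: T_def S_def S_half_def dr_def)
    qed
    thus ?thesis using ssum_cmult[of N "-1" T] by simp
  qed
  have big: "ssum N (\<lambda>i j k. gam * (f (rho1 i j k) * 1) - gam * (f (rho0 i j k) * 1)
        - chi * (rho1 i j k * phi1 i j k) + chi * (rho0 i j k * phi0 i j k)
        + alp / 2 * (phi1 i j k * phi1 i j k) - alp / 2 * (phi0 i j k * phi0 i j k)
        - mu / 2 * (L i j k * dp i j k))
     = ssum N (\<lambda>i j k. gam * T i j k + dr i j k * v i j k - th / dt * (dp i j k * dp i j k)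
        - c * (dr i j k * dr i j k))"
  proof (rule ssum_cong)
    fix i j k assume r: "i \<in> {1..N}" "j \<in> {1..N}" "k \<in> {1..N}"
    have sch: "mu / 2 * L i j k = th * dp i j k / dt + alp / 2 * sp i j k - chi / 2 * (rho1 i j k + rho0 i j k)"
      using scheme_phi[OF r] by (simp add: L_def dp_def sp_def)
    have e: "mu / 2 * (L i j k * dp i j k) = (th * dp i j k / dt + alp / 2 * sp i j k - chi / 2 * (rho1 i j k + rho0 i j k)) * dp i j k"
      using sch by (metis mult.assoc)
    show "gam * (f (rho1 i j k) * 1) - gam * (f (rho0 i j k) * 1)
        - chi * (rho1 i j k * phi1 i j k) + chi * (rho0 i j k * phi0 i j k)
        + alp / 2 * (phi1 i j k * phi1 i j k) - alp / 2 * (phi0 i j k * phi0 i j k)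
        - mu / 2 * (L i j k * dp i j k)
     = gam * T i j k + dr i j k * v i j k - th / dt * (dp i j k * dp i j k)
        - c * (dr i j k * dr i j k)"
      unfolding e using params
      by (simp add: T_def v_def v_half_def S_def dr_def dp_def sp_def c_def field_simps power2_eq_square)
  qed
  have big2: "gam * ssum N (\<lambda>i j k. f (rho1 i j k) * 1) - gam * ssum N (\<lambda>i j k. f (rho0 i j k) * 1)
        - chi * ssum N (\<lambda>i j k. rho1 i j k * phi1 i j k) + chi * ssum N (\<lambda>i j k. rho0 i j k * phi0 i j k)
        + alp / 2 * ssum N (\<lambda>i j k. phi1 i j k * phi1 i j k) - alp / 2 * ssum N (\<lambda>i j k. phi0 i j k * phi0 i j k)
        - mu / 2 * ssum N (\<lambda>i j k. L i j k * dp i j k)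
     = gam * ssum N T + ssum N (\<lambda>i j k. dr i j k * v i j k) - th / dt * ssum N (\<lambda>i j k. dp i j k * dp i j k)
        - c * ssum N (\<lambda>i j k. dr i j k * dr i j k)"
    using big by (simp only: ssum_add ssum_diff ssum_cmult)
  have Fexp: "F_h h N f gam chi mu alp rho1 phi1 - F_h h N f gam chi mu alp rho0 phi0
     = H * (gam * ssum N (\<lambda>i j k. f (rho1 i j k) * 1) - gam * ssum N (\<lambda>i j k. f (rho0 i j k) * 1)
        - chi * ssum N (\<lambda>i j k. rho1 i j k * phi1 i j k) + chi * ssum N (\<lambda>i j k. rho0 i j k * phi0 i j k)
        + alp / 2 * ssum N (\<lambda>i j k. phi1 i j k * phi1 i j k) - alp / 2 * ssum N (\<lambda>i j k. phi0 i j k * phi0 i j k))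
       + mu / 2 * (grad_norm2sq h N phi1 - grad_norm2sq h N phi0)"
    by (simp add: F_h_def norm2sq_def ip_ssum H_def algebra_simps)
  have G: "grad_norm2sq h N phi1 - grad_norm2sq h N phi0 = - (H * ssum N (\<lambda>i j k. L i j k * dp i j k))"
    using L1 L2 by (simp add: ip_ssum H_def L_def)
  have Vd: "H * ssum N (\<lambda>i j k. dr i j k * v i j k) = - dt * Gv"
  proof -
    have "ip h N dr v = - dt * Gv" using C A by simp
    thus ?thesis by (simp add: ip_ssum H_def)
  qed
  define R where "R = - dt * Gv - th / dt * (H * ssum N (\<lambda>i j k. dp i j k * dp i j k))
      - c * (H * ssum N (\<lambda>i j k. dr i j k * dr i j k))"
  have Req: "R = - dt * fip h N (D_grad_h h N D v) (grad_h h N v)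
             - th / dt * norm2sq h N (\<lambda>i j k. phi1 i j k - phi0 i j k)
             - chi\<^sup>2 * dt / (4 * th) * norm2sq h N (\<lambda>i j k. rho1 i j k - rho0 i j k)"
    by (simp add: R_def Gv_def norm2sq_def ip_ssum H_def c_def dp_def dr_def)
  have "F_h h N f gam chi mu alp rho1 phi1 - F_h h N f gam chi mu alp rho0 phi0
     = H * (gam * ssum N T) + R"
  proof -
    have big3: "H * (gam * ssum N (\<lambda>i j k. f (rho1 i j k) * 1) - gam * ssum N (\<lambda>i j k. f (rho0 i j k) * 1)
        - chi * ssum N (\<lambda>i j k. rho1 i j k * phi1 i j k) + chi * ssum N (\<lambda>i j k. rho0 i j k * phi0 i j k)
        + alp / 2 * ssum N (\<lambda>i j k. phi1 i j k * phi1 i j k) - alp / 2 * ssum N (\<lambda>i j k. phi0 i j k * phi0 i j k))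
        - mu / 2 * (H * ssum N (\<lambda>i j k. L i j k * dp i j k))
     = H * (gam * ssum N T) + H * ssum N (\<lambda>i j k. dr i j k * v i j k) - th / dt * (H * ssum N (\<lambda>i j k. dp i j k * dp i j k))
        - c * (H * ssum N (\<lambda>i j k. dr i j k * dr i j k))"
      using arg_cong[where f="\<lambda>x. H * x", OF big2] by (simp add: algebra_simps)
    show ?thesis unfolding Fexp G R_def using big3 Vd by linarith
  qed
  moreover have "H * (gam * ssum N T) \<le> 0"
    using Hpos params(1) Tle by (simp add: mult_nonneg_nonpos)
  moreover have "R \<le> 0"
  proof -
    have "0 \<le> ssum N (\<lambda>i j k. dp i j k * dp i j k)" "0 \<le> ssum N (\<lambda>i j k. dr i j k * dr i j k)"
      by (auto intro: ssum_nonneg)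
    moreover have "c \<ge> 0" using params by (simp add: c_def)
    ultimately have "0 \<le> dt * Gv" "0 \<le> th / dt * (H * ssum N (\<lambda>i j k. dp i j k * dp i j k))"
        "0 \<le> c * (H * ssum N (\<lambda>i j k. dr i j k * dr i j k))"
      using Gv_nonneg params Hpos by (auto intro!: mult_nonneg_nonneg)
    thus ?thesis unfolding R_def by linarith
  qed
  ultimately show ?thesis unfolding Let_def Req[symmetric] v_def[symmetric] D_def[symmetric]
    by linarith
qed

end
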